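(* Let $\gamma:[0,l]\times[0,w)\to E_1^4$, $(s,t)\mapsto\gamma(s,t)$, be a smooth inextensible one-parameter family of partially null curves in $E_1^4$ parametrized by arclength ($\|\partial\gamma/\partial s\|\equiv1$), with Frenet frame $\{T,N,B_1,B_2\}$, curvatures $k_1,k_2$ (and $k_3\equiv0$), and write $$\frac{\partial\gamma}{\partial t}=\beta_1T+\beta_2N+\beta_3B_1+\beta_4B_2$$ with smooth scalar functions $\beta_i$. Then $$\frac{\partial k_1}{\partial t}=\frac{\partial^2\beta_2}{\partial s^2}+\frac{\partial(\beta_1k_1)}{\partial s}-\frac{\partial(\beta_4k_2)}{\partial s}-\frac{\partial\beta_4}{\partial s}k_2.$$
   Context: $E_1^4$ is $\mathbb{R}^4$ with the Lorentzian metric $\langle x,y\rangle=-x_1y_1+x_2y_2+x_3y_3+x_4y_4$ and $\|x\|=\sqrt{|\langle x,x\rangle|}$. A partially null curve is a spacelike curve whose first binormal is a null vector. For such a curve parametrized by arclength $s$, its Frenet frame $\{T,N,B_1,B_2\}$ ($T=\partial\gamma/\partial s$) satisfies $\langle T,T\rangle=\langle N,N\rangle=1$, $\langle B_1,B_1\rangle=\langle B_2,B_2\rangle=0$, $\langle B_1,B_2\rangle=1$, all other inner products zero, and the Frenet equations $T'=k_1N$, $N'=-k_1T+k_2B_1$, $B_1'=k_3B_1$, $B_2'=-k_2N-k_3B_2$, with $k_3\equiv0$. In the family, each $s\mapsto\gamma(s,t)$ is such a curve and frame and curvatures are smooth in $(s,t)$. The flow is inextensible if $\frac{\partial}{\partial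 t}\|\partial\gamma/\partial u\|=0$. *)

theory Defs
  imports "HOL-Analysis.Analysis"
begin

definition linner :: "real^4 \<Rightarrow> real^4 \<Rightarrow> real" where
  "linner x y = - x$1 * y$1 + x$2 * y$2 + x$3 * y$3 + x$4 * y$4"

definition lnorm :: "real^4 \<Rightarrow> real" where
  "lnorm x = sqrt \<bar>linner x x\<bar>"

definition ds :: "(real \<times> real \<Rightarrow> 'a::real_normed_vector) \<Rightarrow> real \<times> real \<Rightarrow> 'a" where
  "ds f p = vector_derivative (\<lambda>\<sigma>. f (\<sigma>, snd p)) (at (fst p))"

definition dt :: "(real \<times> real \<Rightarrow> 'a::real_normed_vector) \<Rightarrow> real \<times> real \<Rightarrow> 'a" where
  "dt f p = vector_derivative (\<lambda>\<tau>. f (fst p, \<tau>)) (at (snd p))"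

fun Ck_on :: "nat \<Rightarrow> (real \<times> real) set \<Rightarrow> (real \<times> real \<Rightarrow> 'a::real_normed_vector) \<Rightarrow> bool" where
  "Ck_on 0 U f = continuous_on U f"
| "Ck_on (Suc k) U f = (f differentiable_on U \<and> Ck_on k U (ds f) \<and> Ck_on k U (dt f))"

definition smooth_on :: "(real \<times> real) set \<Rightarrow> (real \<times> real \<Rightarrow> 'a::real_normed_vector) \<Rightarrow> bool" where
  "smooth_on U f = (\<forall>k. Ck_on k U f)"

end

theory Submission imports Defs begin

lemma deriv_agree:
  fixes f g :: "real \<Rightarrow> 'a::real_normed_vector"
  assumes "(f has_vector_derivative f') (at x within S)" "(g has_vector_derivative g') (at x within S)"
    "x \<in> S" "x islimpt S" "\<And>y. y \<in> S \<Longrightarrow> f y = g y"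
  shows "f' = g'"
proof -
  have "(g has_vector_derivative f') (at x within S)"
    using has_vector_derivative_transform[OF assms(3) _ assms(1)] assms(5) by metis
  then show ?thesis
    using vector_derivative_unique_within[OF _ _ assms(2)] assms(4) trivial_limit_within by blast
qed

lemma islimpt_Icc': "(a::real) < b \<Longrightarrow> x \<in> {a..b} \<Longrightarrow> x islimpt {a..b}"
  by auto
lemma islimpt_Ico': "(a::real) < b \<Longrightarrow> x \<in> {a..<b} \<Longrightarrow> x islimpt {a..<b}"
  by auto

lemma partial_s:
  assumes "f differentiable (at (s,t))"
  shows "((\<lambda>\<sigma>. f (\<sigma>,t)) has_vector_derivative ds f (s,t)) (at s)"
proof -
  have "(\<lambda>\<sigma>. f (\<sigma>,t)) = f \<circ> (\<lambda>\<sigma>. (\<sigma>,t))" by auto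
  moreover have "(\<lambda>\<sigma>::real. (\<sigma>,t)) differentiable (at s)"
    by (intro derivative_intros)
  ultimately have "(\<lambda>\<sigma>. f (\<sigma>,t)) differentiable (at s)"
    using differentiable_chain_at assms by fastforce
  then show ?thesis unfolding ds_def by (simp add: vector_derivative_works[symmetric])
qed

lemma partial_t:
  assumes "f differentiable (at (s,t))"
  shows "((\<lambda>\<tau>. f (s,\<tau>)) has_vector_derivative dt f (s,t)) (at t)"
proof -
  have "(\<lambda>\<tau>. f (s,\<tau>)) = f \<circ> (\<lambda>\<tau>. (s,\<tau>))" by auto
  moreover have "(\<lambda>\<tau>::real. (s,\<tau>)) differentiable (at t)"
    by (intro derivative_intros)
  ultimately have "(\<lambda>\<tau>. f (s,\<tau>)) differentiable (at t)"
    using differentiable_chain_at assms by fastforce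
  then show ?thesis unfolding dt_def by (simp add: vector_derivative_works[symmetric])
qed

lemma smooth_ds: "smooth_on U f \<Longrightarrow> smooth_on U (ds f)"
  unfolding smooth_on_def by (metis Ck_on.simps(2))
lemma smooth_dt: "smooth_on U f \<Longrightarrow> smooth_on U (dt f)"
  unfolding smooth_on_def by (metis Ck_on.simps(2))
lemma smooth_cont: "smooth_on U f \<Longrightarrow> continuous_on U f"
  unfolding smooth_on_def by (metis Ck_on.simps(1))
lemma smooth_diff: "smooth_on U f \<Longrightarrow> open U \<Longrightarrow> p \<in> U \<Longrightarrow> f differentiable (at p)"
  unfolding smooth_on_def by (metis Ck_on.simps(2) differentiable_on_eq_differentiable_at)

lemma clairaut:
  fixes f :: "real \<times> real \<Rightarrow> 'a::banach"
  assumes sm: "smooth_on U f" and U: "open U" and p: "p \<in> U"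
  shows "ds (dt f) p = dt (ds f) p"
proof -
  obtain s0 t0 where p0: "p = (s0,t0)" by fastforce
  obtain e where e: "e > 0" "ball p e \<subseteq> U" using U p open_contains_ball by blast
  define d where "d = e/3"
  have d: "d > 0" using e d_def by auto
  define a where "a = s0 - d"
  define I where "I = {t0-d..t0+d}"
  define J where "J = {a..s0+d}"
  have box: "(\<sigma>,\<tau>) \<in> U" if "\<sigma> \<in> J" "\<tau> \<in> I" for \<sigma> \<tau>
  proof -
    have "dist p (\<sigma>,\<tau>) = sqrt ((s0-\<sigma>)^2 + (t0-\<tau>)^2)"
      by (simp add: p0 dist_Pair_Pair dist_real_def)
    also have "\<dots> \<le> \<bar>s0-\<sigma>\<bar> + \<bar>t0-\<tau>\<bar>"
      using sqrt_sum_squares_le_sum_abs by simp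
    also have "\<dots> < e" using that d_def a_def I_def J_def e by auto
    finally show ?thesis using e by auto
  qed
  have sm1: "smooth_on U (ds f)" "smooth_on U (dt f)" "smooth_on U (dt (ds f))"
    using sm smooth_ds smooth_dt by blast+
  have contdsf: "continuous_on U (ds f)" "continuous_on U (dt (ds f))"
    using sm1 smooth_cont by blast+
  have cont_slice: "continuous_on J (\<lambda>\<sigma>. g (\<sigma>,\<tau>))" if "continuous_on U g" "\<tau> \<in> I" for g :: "real \<times> real \<Rightarrow> 'a" and \<tau>
  proof (rule continuous_on_compose2[OF that(1), of J "\<lambda>\<sigma>. (\<sigma>,\<tau>)"])
    show "continuous_on J (\<lambda>\<sigma>. (\<sigma>, \<tau>))" by (intro continuous_intros)
    show "(\<lambda>\<sigma>. (\<sigma>, \<tau>)) ` J \<subseteq> U" using box that(2) by auto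
  qed
  have t0I: "t0 \<in> I" using d I_def by auto
  have s0J: "s0 \<in> J" using d a_def J_def by auto
  have aJ: "a \<in> J" using d a_def J_def by auto
  have F1: "integral {a..s} (\<lambda>\<sigma>. ds f (\<sigma>,\<tau>)) = f (s,\<tau>) - f (a,\<tau>)"
    if "s \<in> J" "\<tau> \<in> I" for s \<tau>
  proof -
    have "((\<lambda>\<sigma>. ds f (\<sigma>,\<tau>)) has_integral f (s,\<tau>) - f (a,\<tau>)) {a..s}"
    proof (rule fundamental_theorem_of_calculus[where f="\<lambda>\<sigma>. f (\<sigma>,\<tau>)"])
      show "a \<le> s" using that J_def by auto
      fix x assume "x \<in> {a..s}"
      then have "x \<in> J" using that J_def by auto
      then have "f differentiable (at (x,\<tau>))" using smooth_diff[OF sm U] box[OF _ that(2)] by blast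
      from partial_s[OF this] show "((\<lambda>\<sigma>. f (\<sigma>,\<tau>)) has_vector_derivative ds f (x,\<tau>)) (at x within {a..s})"
        by (rule has_vector_derivative_at_within)
    qed
    then show ?thesis by (rule integral_unique)
  qed
  have F2: "((\<lambda>\<tau>. integral {a..s} (\<lambda>\<sigma>. ds f (\<sigma>,\<tau>))) has_vector_derivative
              integral {a..s} (\<lambda>\<sigma>. dt (ds f) (\<sigma>,t0))) (at t0 within I)"
    if s: "s \<in> J" for s
  proof -
    have sub: "{a..s} \<subseteq> J" using s J_def by auto
    have "((\<lambda>\<tau>. integral (cbox a s) (\<lambda>\<sigma>. ds f (\<sigma>,\<tau>))) has_vector_derivative
              integral (cbox a s) (\<lambda>\<sigma>. dt (ds f) (\<sigma>,t0))) (at t0 within I)"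
    proof (rule leibniz_rule_vector_derivative[where fx="\<lambda>\<tau> \<sigma>. dt (ds f) (\<sigma>,\<tau>)"])
      fix x t assume xt: "x \<in> I" "t \<in> cbox a s"
      then have "ds f differentiable (at (t,x))" using smooth_diff[OF sm1(1) U] box sub by auto
      from partial_t[OF this] show "((\<lambda>x. ds f (t,x)) has_vector_derivative dt (ds f) (t,x)) (at x within I)"
        by (rule has_vector_derivative_at_within)
    next
      fix x assume "x \<in> I"
      then have "continuous_on J (\<lambda>\<sigma>. ds f (\<sigma>,x))" by (rule cont_slice[OF contdsf(1)])
      then have "continuous_on (cbox a s) (\<lambda>\<sigma>. ds f (\<sigma>,x))" using sub continuous_on_subset by auto
      then show "(\<lambda>\<sigma>. ds f (\<sigma>,x)) integrable_on cbox a s" by (rule integrable_continuous)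
    next
      show "continuous_on (I \<times> cbox a s) (\<lambda>(x, t). dt (ds f) (t,x))"
      proof -
        have "continuous_on (I \<times> cbox a s) (\<lambda>p. dt (ds f) ((\<lambda>p. (snd p, fst p)) p))"
        proof (rule continuous_on_compose2[OF contdsf(2)])
          show "continuous_on (I \<times> cbox a s) (\<lambda>p. (snd p, fst p))" by (intro continuous_intros)
          show "(\<lambda>p. (snd p, fst p)) ` (I \<times> cbox a s) \<subseteq> U" using box sub by auto
        qed
        then show ?thesis by (simp add: case_prod_unfold)
      qed
    next
      show "t0 \<in> I" "convex I" using t0I I_def by auto
    qed
    then show ?thesis by simp
  qed
  have F3: "dt f (s,t0) - dt f (a,t0) = integral {a..s} (\<lambda>\<sigma>. dt (ds f) (\<sigma>,t0))" if s: "s \<in> J" for s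
  proof (rule deriv_agree[OF _ F2[OF s] t0I])
    have "f differentiable (at (s,t0))" "f differentiable (at (a,t0))"
      using smooth_diff[OF sm U] box s aJ t0I by auto
    note dd = this
    show "((\<lambda>\<tau>. f (s,\<tau>) - f (a,\<tau>)) has_vector_derivative dt f (s,t0) - dt f (a,t0)) (at t0 within I)"
      by (rule has_vector_derivative_at_within[OF has_vector_derivative_diff[OF partial_t[OF dd(1)] partial_t[OF dd(2)]]])
    show "t0 islimpt I" using t0I I_def d by auto
    show "f (s,y) - f (a,y) = integral {a..s} (\<lambda>\<sigma>. ds f (\<sigma>,y))" if "y \<in> I" for y
      using F1[OF s that] by simp
  qed
  have "ds (dt f) (s0,t0) - 0 = dt (ds f) (s0,t0)"
  proof (rule deriv_agree[OF _ _ s0J])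
    have "dt f differentiable (at (s0,t0))" using smooth_diff[OF sm1(2) U] box s0J t0I by auto
    note dd = this
    show "((\<lambda>s. dt f (s,t0) - dt f (a,t0)) has_vector_derivative ds (dt f) (s0,t0) - 0) (at s0 within J)"
      by (rule has_vector_derivative_at_within[OF has_vector_derivative_diff[OF partial_s[OF dd] has_vector_derivative_const]])
    show "((\<lambda>s. integral {a..s} (\<lambda>\<sigma>. dt (ds f) (\<sigma>,t0))) has_vector_derivative dt (ds f) (s0,t0)) (at s0 within J)"
      unfolding J_def by (rule integral_has_vector_derivative) (use cont_slice[OF contdsf(2) t0I] s0J in \<open>auto simp: J_def\<close>)
    show "s0 islimpt J" using s0J J_def a_def d by auto
    show "dt f (y,t0) - dt f (a,t0) = integral {a..y} (\<lambda>\<sigma>. dt (ds f) (\<sigma>,t0))" if "y \<in> J" for y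
      using F3[OF that] .
  qed
  then show ?thesis using p0 by simp
qed

lemma linner_simps:
  "linner (x+y) z = linner x z + linner y z"
  "linner z (x+y) = linner z x + linner z y"
  "linner (x-y) z = linner x z - linner y z"
  "linner z (x-y) = linner z x - linner z y"
  "linner (c *\<^sub>R x) z = c * linner x z"
  "linner z (c *\<^sub>R x) = c * linner z x"
  "linner (-x) z = - linner x z"
  "linner z (-x) = - linner z x"
  "linner 0 z = 0" "linner z 0 = 0"
  by (simp_all add: linner_def algebra_simps)

lemma linner_commute: "linner x y = linner y x"
  by (simp add: linner_def algebra_simps)

lemma bb_linner: "bounded_bilinear linner"
proof
  fix a a' b b' :: "real^4" and r :: real
  show "linner (a + a') b = linner a b + linner a' b" "linner a (b + b') = linner a b + linner a b'"
    "linner (r *\<^sub>R a) b = r *\<^sub>R linner a b" "linner a (r *\<^sub>R b) = r *\<^sub>R linner a b"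
    by (simp_all add: linner_simps)
next
  show "\<exists>K. \<forall>a b. norm (linner a b) \<le> norm a * norm b * K"
  proof (intro exI allI)
    fix a b :: "real^4"
    have c: "\<bar>a$i * b$i\<bar> \<le> norm a * norm b" for i
      unfolding abs_mult by (intro mult_mono component_le_norm_cart) auto
    show "norm (linner a b) \<le> norm a * norm b * 4"
      using c[of 1] c[of 2] c[of 3] c[of 4] by (auto simp: linner_def split: abs_split)
  qed
qed

lemma hs: "smooth_on U g \<Longrightarrow> open U \<Longrightarrow> (s,t) \<in> U \<Longrightarrow> ((\<lambda>\<sigma>. g (\<sigma>,t)) has_vector_derivative ds g (s,t)) (at s)"
  by (rule partial_s[OF smooth_diff])
lemma ht: "smooth_on U g \<Longrightarrow> open U \<Longrightarrow> (s,t) \<in> U \<Longrightarrow> ((\<lambda>\<tau>. g (s,\<tau>)) has_vector_derivative dt g (s,t)) (at t)"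
  by (rule partial_t[OF smooth_diff])
lemma hsr: "smooth_on U g \<Longrightarrow> open U \<Longrightarrow> (s,t) \<in> U \<Longrightarrow> ((\<lambda>\<sigma>. g (\<sigma>,t)) has_field_derivative ds g (s,t)) (at s within X)"
  for g :: "real \<times> real \<Rightarrow> real"
  using hs[of U g s t] has_real_derivative_iff_has_vector_derivative has_field_derivative_at_within by blast

lemma transfer_s:
  fixes F G :: "real \<Rightarrow> 'a::real_normed_vector"
  assumes "0 < l" "s \<in> {0..l}" "(F has_vector_derivative DF) (at s)" "(G has_vector_derivative DG) (at s)"
    "\<And>\<sigma>. \<sigma> \<in> {0..l} \<Longrightarrow> F \<sigma> = G \<sigma>"
  shows "DF = DG"
  by (rule deriv_agree[OF has_vector_derivative_at_within[OF assms(3)] has_vector_derivative_at_within[OF assms(4)] assms(2)])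
     (use assms in auto)

lemma transfer_t:
  fixes F G :: "real \<Rightarrow> 'a::real_normed_vector"
  assumes "0 < w" "t \<in> {0..<w}" "(F has_vector_derivative DF) (at t)" "(G has_vector_derivative DG) (at t)"
    "\<And>\<tau>. \<tau> \<in> {0..<w} \<Longrightarrow> F \<tau> = G \<tau>"
  shows "DF = DG"
  by (rule deriv_agree[OF has_vector_derivative_at_within[OF assms(3)] has_vector_derivative_at_within[OF assms(4)] assms(2)])
     (use assms in auto)

theorem theorem3p6:
  fixes l w :: real and U :: "(real \<times> real) set"
    and \<gamma> T N B1 B2 :: "real \<times> real \<Rightarrow> real^4"
    and k1 k2 \<beta>1 \<beta>2 \<beta>3 \<beta>4 :: "real \<times> real \<Rightarrow> real"
  assumes l: "l > 0" and w: "w > 0"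
    and U: "open U" "{0..l} \<times> {0..<w} \<subseteq> U"
    and smooth: "smooth_on U \<gamma>" "smooth_on U T" "smooth_on U N" "smooth_on U B1" "smooth_on U B2"
       "smooth_on U k1" "smooth_on U k2"
       "smooth_on U \<beta>1" "smooth_on U \<beta>2" "smooth_on U \<beta>3" "smooth_on U \<beta>4"
    and arclength: "\<And>p. p \<in> {0..l} \<times> {0..<w} \<Longrightarrow> lnorm (ds \<gamma> p) = 1"
    and tangent: "\<And>p. p \<in> {0..l} \<times> {0..<w} \<Longrightarrow> T p = ds \<gamma> p"
    and frame: "\<And>p. p \<in> {0..l} \<times> {0..<w} \<Longrightarrow>
        linner (T p) (T p) = 1 \<and> linner (N p) (N p) = 1 \<and>
        linner (B1 p) (B1 p) = 0 \<and> linner (B2 p) (B2 p) = 0 \<and> linner (B1 p) (B2 p) = 1 \<and>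
        linner (T p) (N p) = 0 \<and> linner (T p) (B1 p) = 0 \<and> linner (T p) (B2 p) = 0 \<and>
        linner (N p) (B1 p) = 0 \<and> linner (N p) (B2 p) = 0"
    and frenet: "\<And>p. p \<in> {0..l} \<times> {0..<w} \<Longrightarrow>
        ds T p = k1 p *\<^sub>R N p \<and>
        ds N p = - k1 p *\<^sub>R T p + k2 p *\<^sub>R B1 p \<and>
        ds B1 p = 0 *\<^sub>R B1 p \<and>
        ds B2 p = - k2 p *\<^sub>R N p - 0 *\<^sub>R B2 p"
    and inextensible: "\<And>p. p \<in> {0..l} \<times> {0..<w} \<Longrightarrow> dt (\<lambda>q. lnorm (ds \<gamma> q)) p = 0"
    and variation: "\<And>p. p \<in> {0..l} \<times> {0..<w} \<Longrightarrow>
        dt \<gamma> p = \<beta>1 p *\<^sub>R T p + \<beta>2 p *\<^sub>R N p + \<beta>3 p *\<^sub>R B1 p + \<beta>4 p *\<^sub>R B2 p"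
  shows "\<And>p. p \<in> {0..l} \<times> {0..<w} \<Longrightarrow>
     dt k1 p = ds (ds \<beta>2) p + ds (\<lambda>q. \<beta>1 q * k1 q) p - ds (\<lambda>q. \<beta>4 q * k2 q) p
               - ds \<beta>4 p * k2 p"
proof -
  fix p assume pD: "p \<in> {0..l} \<times> {0..<w}"
  obtain s0 t0 where p0: "p = (s0,t0)" by fastforce
  have s0: "s0 \<in> {0..l}" and t0: "t0 \<in> {0..<w}" using pD p0 by auto
  have DU: "(s,t) \<in> U" if "s \<in> {0..l}" "t \<in> {0..<w}" for s t using U(2) that by auto
  have Uq: "(s0,t0) \<in> U" using DU s0 t0 by blast
  note sm = smooth
  have fr: "linner (T (s0,t0)) (T (s0,t0)) = 1" "linner (N (s0,t0)) (N (s0,t0)) = 1"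
     "linner (B1 (s0,t0)) (B1 (s0,t0)) = 0" "linner (B2 (s0,t0)) (B2 (s0,t0)) = 0"
     "linner (B1 (s0,t0)) (B2 (s0,t0)) = 1"
     "linner (T (s0,t0)) (N (s0,t0)) = 0" "linner (T (s0,t0)) (B1 (s0,t0)) = 0" "linner (T (s0,t0)) (B2 (s0,t0)) = 0"
     "linner (N (s0,t0)) (B1 (s0,t0)) = 0" "linner (N (s0,t0)) (B2 (s0,t0)) = 0"
    using frame[of "(s0,t0)"] s0 t0 by auto
  have fr2: "linner (N (s0,t0)) (T (s0,t0)) = 0" "linner (B1 (s0,t0)) (T (s0,t0)) = 0"
     "linner (B2 (s0,t0)) (T (s0,t0)) = 0" "linner (B1 (s0,t0)) (N (s0,t0)) = 0"
     "linner (B2 (s0,t0)) (N (s0,t0)) = 0" "linner (B2 (s0,t0)) (B1 (s0,t0)) = 1"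
    using fr linner_commute by metis+
  have fn: "ds T (s0,t0) = k1 (s0,t0) *\<^sub>R N (s0,t0)"
      "ds N (s0,t0) = - k1 (s0,t0) *\<^sub>R T (s0,t0) + k2 (s0,t0) *\<^sub>R B1 (s0,t0)"
      "ds B1 (s0,t0) = 0 *\<^sub>R B1 (s0,t0)"
      "ds B2 (s0,t0) = - k2 (s0,t0) *\<^sub>R N (s0,t0) - 0 *\<^sub>R B2 (s0,t0)"
    using frenet[of "(s0,t0)"] s0 t0 by auto
  \<comment> \<open>unit vectors have orthogonal t-derivatives\<close>
  have nN: "linner (N (s0,t0)) (dt N (s0,t0)) = 0"
  proof -
    have "linner (N (s0,t0)) (dt N (s0,t0)) + linner (dt N (s0,t0)) (N (s0,t0)) = 0"
    proof (rule transfer_t[OF w t0])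
      show "((\<lambda>\<tau>. linner (N (s0,\<tau>)) (N (s0,\<tau>))) has_vector_derivative
             linner (N (s0,t0)) (dt N (s0,t0)) + linner (dt N (s0,t0)) (N (s0,t0))) (at t0)"
        by (rule bounded_bilinear.has_vector_derivative[OF bb_linner ht[OF sm(3) U(1) Uq] ht[OF sm(3) U(1) Uq]])
      show "((\<lambda>\<tau>. 1::real) has_vector_derivative 0) (at t0)" by (rule has_vector_derivative_const)
      show "linner (N (s0,\<tau>)) (N (s0,\<tau>)) = 1" if "\<tau> \<in> {0..<w}" for \<tau> using frame[of "(s0,\<tau>)"] s0 that by auto
    qed
    then show ?thesis by (simp add: linner_commute)
  qed
  have tT: "linner (T (s0,t0)) (dt T (s0,t0)) = 0"
  proof -
    have "linner (T (s0,t0)) (dt T (s0,t0)) + linner (dt T (s0,t0)) (T (s0,t0)) = 0"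
    proof (rule transfer_t[OF w t0])
      show "((\<lambda>\<tau>. linner (T (s0,\<tau>)) (T (s0,\<tau>))) has_vector_derivative
             linner (T (s0,t0)) (dt T (s0,t0)) + linner (dt T (s0,t0)) (T (s0,t0))) (at t0)"
        by (rule bounded_bilinear.has_vector_derivative[OF bb_linner ht[OF sm(2) U(1) Uq] ht[OF sm(2) U(1) Uq]])
      show "((\<lambda>\<tau>. 1::real) has_vector_derivative 0) (at t0)" by (rule has_vector_derivative_const)
      show "linner (T (s0,\<tau>)) (T (s0,\<tau>)) = 1" if "\<tau> \<in> {0..<w}" for \<tau> using frame[of "(s0,\<tau>)"] s0 that by auto
    qed
    then show ?thesis by (simp add: linner_commute)
  qed
  have kA: "dt k1 (s0,t0) = linner (ds T (s0,t0)) (dt N (s0,t0)) + linner (dt (ds T) (s0,t0)) (N (s0,t0))"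
  proof (rule transfer_t[OF w t0 ht[OF sm(6) U(1) Uq]])
    show "((\<lambda>\<tau>. linner (ds T (s0,\<tau>)) (N (s0,\<tau>))) has_vector_derivative
             linner (ds T (s0,t0)) (dt N (s0,t0)) + linner (dt (ds T) (s0,t0)) (N (s0,t0))) (at t0)"
      by (rule bounded_bilinear.has_vector_derivative[OF bb_linner ht[OF smooth_ds[OF sm(2)] U(1) Uq] ht[OF sm(3) U(1) Uq]])
    show "k1 (s0,\<tau>) = linner (ds T (s0,\<tau>)) (N (s0,\<tau>))" if "\<tau> \<in> {0..<w}" for \<tau>
      using frame[of "(s0,\<tau>)"] frenet[of "(s0,\<tau>)"] s0 that by (auto simp: linner_simps)
  qed
  have kA2: "dt k1 (s0,t0) = linner (dt (ds T) (s0,t0)) (N (s0,t0))"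
    using kA nN fn(1) by (simp add: linner_simps)
  define W where "W = (\<lambda>q. (ds \<beta>1 q - \<beta>2 q * k1 q) *\<^sub>R T q + (\<beta>1 q * k1 q + ds \<beta>2 q - \<beta>4 q * k2 q) *\<^sub>R N q
     + (\<beta>2 q * k2 q + ds \<beta>3 q) *\<^sub>R B1 q + ds \<beta>4 q *\<^sub>R B2 q)"
  have dtT: "dt T (s,t) = W (s,t)" if st: "s \<in> {0..l}" "t \<in> {0..<w}" for s t
  proof -
    have Ust: "(s,t) \<in> U" using DU st by blast
    have e1: "dt T (s,t) = dt (ds \<gamma>) (s,t)"
      by (rule transfer_t[OF w st(2) ht[OF sm(2) U(1) Ust] ht[OF smooth_ds[OF sm(1)] U(1) Ust]])
         (use tangent st in auto)
    have e2: "dt (ds \<gamma>) (s,t) = ds (dt \<gamma>) (s,t)" using clairaut[OF sm(1) U(1) Ust] by simp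
    have e3: "ds (dt \<gamma>) (s,t) =
        ((\<beta>1 (s,t) *\<^sub>R ds T (s,t) + ds \<beta>1 (s,t) *\<^sub>R T (s,t)) + (\<beta>2 (s,t) *\<^sub>R ds N (s,t) + ds \<beta>2 (s,t) *\<^sub>R N (s,t)))
        + (\<beta>3 (s,t) *\<^sub>R ds B1 (s,t) + ds \<beta>3 (s,t) *\<^sub>R B1 (s,t)) + (\<beta>4 (s,t) *\<^sub>R ds B2 (s,t) + ds \<beta>4 (s,t) *\<^sub>R B2 (s,t))"
      apply (rule transfer_s[OF l st(1) hs[OF smooth_dt[OF sm(1)] U(1) Ust]
        has_vector_derivative_add[OF has_vector_derivative_add[OF has_vector_derivative_add[OF
          has_vector_derivative_scaleR[OF hsr[OF sm(8) U(1) Ust] hs[OF sm(2) U(1) Ust]]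
          has_vector_derivative_scaleR[OF hsr[OF sm(9) U(1) Ust] hs[OF sm(3) U(1) Ust]]]
          has_vector_derivative_scaleR[OF hsr[OF sm(10) U(1) Ust] hs[OF sm(4) U(1) Ust]]]
          has_vector_derivative_scaleR[OF hsr[OF sm(11) U(1) Ust] hs[OF sm(5) U(1) Ust]]]])
      using variation st by auto
    have fq: "ds T (s,t) = k1 (s,t) *\<^sub>R N (s,t)"
      "ds N (s,t) = - k1 (s,t) *\<^sub>R T (s,t) + k2 (s,t) *\<^sub>R B1 (s,t)"
      "ds B1 (s,t) = 0 *\<^sub>R B1 (s,t)"
      "ds B2 (s,t) = - k2 (s,t) *\<^sub>R N (s,t) - 0 *\<^sub>R B2 (s,t)"
      using frenet[of "(s,t)"] st by auto
    show ?thesis unfolding e1 e2 e3 fq W_def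
      by (simp add: algebra_simps)
  qed
  have aZ: "ds \<beta>1 (s0,t0) - \<beta>2 (s0,t0) * k1 (s0,t0) = 0"
    using tT unfolding dtT[OF s0 t0] W_def by (simp add: linner_simps fr fr2)
  have d1: "dt (ds T) (s0,t0) = ds (dt T) (s0,t0)" using clairaut[OF sm(2) U(1) Uq] by simp
  define A where "A = (\<lambda>q. ds \<beta>1 q - \<beta>2 q * k1 q)"
  define Bc where "Bc = (\<lambda>q. \<beta>1 q * k1 q + ds \<beta>2 q - \<beta>4 q * k2 q)"
  define C where "C = (\<lambda>q. \<beta>2 q * k2 q + ds \<beta>3 q)"
  define Dd where "Dd = (\<lambda>q. ds \<beta>4 q)"
  have Wabc: "W = (\<lambda>q. A q *\<^sub>R T q + Bc q *\<^sub>R N q + C q *\<^sub>R B1 q + Dd q *\<^sub>R B2 q)"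
    unfolding W_def A_def Bc_def C_def Dd_def ..
  have hr: "((\<lambda>\<sigma>. g (\<sigma>,t0)) has_field_derivative ds g (s0,t0)) (at s0)" if "smooth_on U g" for g :: "real \<times> real \<Rightarrow> real"
    using hsr[OF that U(1) Uq] by simp
  note hrs = hr[OF sm(6)] hr[OF sm(7)] hr[OF sm(8)] hr[OF sm(9)] hr[OF sm(10)] hr[OF sm(11)]
    hr[OF smooth_ds[OF sm(8)]] hr[OF smooth_ds[OF sm(9)]] hr[OF smooth_ds[OF sm(10)]] hr[OF smooth_ds[OF sm(11)]]
  define A' where "A' = ds (ds \<beta>1) (s0,t0) - (\<beta>2 (s0,t0) * ds k1 (s0,t0) + ds \<beta>2 (s0,t0) * k1 (s0,t0))"
  define B' where "B' = (\<beta>1 (s0,t0) * ds k1 (s0,t0) + ds \<beta>1 (s0,t0) * k1 (s0,t0)) + ds (ds \<beta>2) (s0,t0)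
      - (\<beta>4 (s0,t0) * ds k2 (s0,t0) + ds \<beta>4 (s0,t0) * k2 (s0,t0))"
  define C' where "C' = (\<beta>2 (s0,t0) * ds k2 (s0,t0) + ds \<beta>2 (s0,t0) * k2 (s0,t0)) + ds (ds \<beta>3) (s0,t0)"
  define D' where "D' = ds (ds \<beta>4) (s0,t0)"
  have dA: "((\<lambda>\<sigma>. A (\<sigma>,t0)) has_field_derivative A') (at s0)"
    unfolding A_def A'_def by (rule derivative_eq_intros hrs | simp)+
  have dB: "((\<lambda>\<sigma>. Bc (\<sigma>,t0)) has_field_derivative B') (at s0)"
    unfolding Bc_def B'_def by (rule derivative_eq_intros hrs | simp)+
  have dC: "((\<lambda>\<sigma>. C (\<sigma>,t0)) has_field_derivative C') (at s0)"
    unfolding C_def C'_def by (rule derivative_eq_intros hrs | simp)+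
  have dD: "((\<lambda>\<sigma>. Dd (\<sigma>,t0)) has_field_derivative D') (at s0)"
    unfolding Dd_def D'_def by (rule hrs)
  have d2: "ds (dt T) (s0,t0) =
        ((A (s0,t0) *\<^sub>R ds T (s0,t0) + A' *\<^sub>R T (s0,t0)) + (Bc (s0,t0) *\<^sub>R ds N (s0,t0) + B' *\<^sub>R N (s0,t0)))
        + (C (s0,t0) *\<^sub>R ds B1 (s0,t0) + C' *\<^sub>R B1 (s0,t0)) + (Dd (s0,t0) *\<^sub>R ds B2 (s0,t0) + D' *\<^sub>R B2 (s0,t0))"
    apply (rule transfer_s[OF l s0 hs[OF smooth_dt[OF sm(2)] U(1) Uq]
        has_vector_derivative_add[OF has_vector_derivative_add[OF has_vector_derivative_add[OF
          has_vector_derivative_scaleR[OF dA hs[OF sm(2) U(1) Uq]]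
          has_vector_derivative_scaleR[OF dB hs[OF sm(3) U(1) Uq]]]
          has_vector_derivative_scaleR[OF dC hs[OF sm(4) U(1) Uq]]]
          has_vector_derivative_scaleR[OF dD hs[OF sm(5) U(1) Uq]]]])
    using dtT t0 unfolding Wabc by auto
  have prod1: "ds (\<lambda>q. \<beta>1 q * k1 q) (s0,t0) = \<beta>1 (s0,t0) * ds k1 (s0,t0) + ds \<beta>1 (s0,t0) * k1 (s0,t0)"
  proof -
    have "((\<lambda>\<sigma>. \<beta>1 (\<sigma>,t0) * k1 (\<sigma>,t0)) has_field_derivative \<beta>1 (s0,t0) * ds k1 (s0,t0) + ds \<beta>1 (s0,t0) * k1 (s0,t0)) (at s0)"
      by (rule derivative_eq_intros hrs | simp)+
    then show ?thesis unfolding ds_def has_real_derivative_iff_has_vector_derivative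
      by (simp add: vector_derivative_at)
  qed
  have prod2: "ds (\<lambda>q. \<beta>4 q * k2 q) (s0,t0) = \<beta>4 (s0,t0) * ds k2 (s0,t0) + ds \<beta>4 (s0,t0) * k2 (s0,t0)"
  proof -
    have "((\<lambda>\<sigma>. \<beta>4 (\<sigma>,t0) * k2 (\<sigma>,t0)) has_field_derivative \<beta>4 (s0,t0) * ds k2 (s0,t0) + ds \<beta>4 (s0,t0) * k2 (s0,t0)) (at s0)"
      by (rule derivative_eq_intros hrs | simp)+
    then show ?thesis unfolding ds_def has_real_derivative_iff_has_vector_derivative
      by (simp add: vector_derivative_at)
  qed
  have "dt k1 (s0,t0) = A (s0,t0) * k1 (s0,t0) + B' - Dd (s0,t0) * k2 (s0,t0)"
    unfolding kA2 d1 d2 fn by (simp add: linner_simps fr fr2)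
  then have "dt k1 (s0,t0) = B' - ds \<beta>4 (s0,t0) * k2 (s0,t0)"
    using aZ unfolding A_def Dd_def by simp
  then show "dt k1 p = ds (ds \<beta>2) p + ds (\<lambda>q. \<beta>1 q * k1 q) p - ds (\<lambda>q. \<beta>4 q * k2 q) p - ds \<beta>4 p * k2 p"
    unfolding p0 prod1 prod2 B'_def by simp
qed

end
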